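(* Let $q$ be a prime power, $b$ a positive integer, and $M,D$ positive integers with $M>q^b$ and $D\ge b-1$. Then $N_{b+1}(M,D)\le N_b(M,D-1)$.
   Context: For a positive integer $c$ and $\boldsymbol{z}=(z_0,\ldots,z_{n-1}),\boldsymbol{w}\in\mathbb{F}_q^n$, $d_c(\boldsymbol{z},\boldsymbol{w})$ is the number of $i\in\{0,\ldots,n-1\}$ with $(z_i,\ldots,z_{i+c-1})\ne(w_i,\ldots,w_{i+c-1})$ (indices mod $n$). $N_c(M,D)$ is the smallest length $r$ such that there exist $M$ vectors $\boldsymbol{p}_1,\ldots,\boldsymbol{p}_M\in\mathbb{F}_q^r$ with $d_c(\boldsymbol{p}_i,\boldsymbol{p}_j)\ge D$ for all $i\ne j$. *)

theory Defs
  imports Main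
begin

definition dsym :: "nat \<Rightarrow> 'a list \<Rightarrow> 'a list \<Rightarrow> nat" where
  "dsym c z w = (let n = length z in
     card {i. i < n \<and> (\<exists>j<c. z ! ((i + j) mod n) \<noteq> w ! ((i + j) mod n))})"

text \<open>N_c(M,D) over the alphabet 'a (a finite field F_q): least length r admitting
  M distinct vectors in 'a^r with pairwise c-symbol distance at least D.\<close>
definition Nsym :: "'a itself \<Rightarrow> nat \<Rightarrow> nat \<Rightarrow> nat \<Rightarrow> nat" where
  "Nsym _ c M D = (LEAST r. \<exists>p :: nat \<Rightarrow> 'a list.
      (\<forall>i<M. length (p i) = r) \<and> inj_on p {..<M} \<and>
      (\<forall>i<M. \<forall>j<M. i \<noteq> j \<longrightarrow> D \<le> dsym c (p i) (p j)))"

end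

theory Submission
  imports Defs
begin

lemma card_lists_univ: "card {xs::'a::finite list. length xs = n} = card (UNIV :: 'a set) ^ n"
  using card_lists_length_eq[of "UNIV::'a set" n] by simp

lemma finite_lists_univ: "finite {xs::'a::finite list. length xs = n}"
  using finite_lists_length_eq[of "UNIV::'a set" n] by simp

lemma hamming_le_dsym:
  assumes "0 < c" "length w = length z"
  shows "card {k. k < length z \<and> z ! k \<noteq> w ! k} \<le> dsym c z w"
proof -
  have "{k. k < length z \<and> z ! k \<noteq> w ! k} \<subseteq>
     {i. i < length z \<and> (\<exists>j<c. z ! ((i + j) mod length z) \<noteq> w ! ((i + j) mod length z))}"
    using assms by (auto intro!: exI[of _ 0])
  then show ?thesis unfolding dsym_def Let_def by (intro card_mono) auto
qed

lemma card_field_ge2: "2 \<le> card (UNIV :: 'a::{field,finite} set)"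
proof -
  have "{0::'a, 1} \<subseteq> UNIV" by simp
  then have "card {0::'a,1} \<le> card (UNIV :: 'a set)" by (intro card_mono) auto
  then show ?thesis by simp
qed

lemma exists_code:
  assumes "0 < c"
  shows "\<exists>r. \<exists>p :: nat \<Rightarrow> 'a::{field,finite} list.
      (\<forall>i<M. length (p i) = r) \<and> inj_on p {..<M} \<and>
      (\<forall>i<M. \<forall>j<M. i \<noteq> j \<longrightarrow> D \<le> dsym c (p i) (p j))"
proof -
  let ?L = M
  have "M < 2 ^ M" by (rule less_exp)
  also have "\<dots> \<le> card (UNIV :: 'a set) ^ M" using card_field_ge2 by (intro power_mono) auto
  finally have "card {..<M} \<le> card {xs::'a list. length xs = ?L}"
    by (simp add: card_lists_univ)
  then obtain u where u: "u ` {..<M} \<subseteq> {xs::'a list. length xs = ?L}" "inj_on u {..<M}"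
    using card_le_inj[OF _ finite_lists_univ] by blast
  define p where "p i = map (\<lambda>k. u i ! (k mod ?L)) [0..<Suc D * ?L]" for i
  have len: "length (p i) = Suc D * ?L" for i by (simp add: p_def)
  have dist: "Suc D \<le> dsym c (p i) (p j)" if "i < M" "j < M" "i \<noteq> j" for i j
  proof -
    have "u i \<noteq> u j" using u(2) that by (auto dest: inj_onD)
    moreover have "length (u i) = ?L" "length (u j) = ?L" using u(1) that by auto
    ultimately obtain t where t: "t < ?L" "u i ! t \<noteq> u j ! t"
      using nth_equalityI by metis
    have "(\<lambda>m. t + m * ?L) ` {..<Suc D} \<subseteq> {k. k < length (p i) \<and> p i ! k \<noteq> p j ! k}"
    proof
      fix x assume "x \<in> (\<lambda>m. t + m * ?L) ` {..<Suc D}"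
      then obtain m where m: "m < Suc D" "x = t + m * ?L" by auto
      have "t + m * ?L < Suc D * ?L"
      proof -
        have "t + m * ?L < ?L + m * ?L" using t by simp
        also have "\<dots> = Suc m * ?L" by simp
        also have "\<dots> \<le> Suc D * ?L" using m by (intro mult_le_mono1) simp
        finally show ?thesis .
      qed
      moreover have "(t + m * ?L) mod ?L = t" using t by simp
      ultimately show "x \<in> {k. k < length (p i) \<and> p i ! k \<noteq> p j ! k}"
        using m t by (simp add: p_def len)
    qed
    moreover have "inj_on (\<lambda>m. t + m * ?L) {..<Suc D}"
      using t by (auto simp: inj_on_def)
    ultimately have "Suc D \<le> card {k. k < length (p i) \<and> p i ! k \<noteq> p j ! k}"
      by (metis (no_types, lifting) card_inj_on_le card_lessThan finite_nat_set_iff_bounded mem_Collect_eq)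
    also have "\<dots> \<le> dsym c (p i) (p j)" using hamming_le_dsym[OF assms] len by metis
    finally show ?thesis .
  qed
  have "inj_on p {..<M}"
  proof (rule inj_onI)
    fix i j assume ij: "i \<in> {..<M}" "j \<in> {..<M}" "p i = p j"
    show "i = j"
    proof (rule ccontr)
      assume "i \<noteq> j"
      with dist[of i j] ij have "Suc D \<le> dsym c (p j) (p j)" by simp
      moreover have "dsym c (p j) (p j) = 0" by (simp add: dsym_def)
      ultimately show False by simp
    qed
  qed
  then show ?thesis using len dist
    by (intro exI[of _ "Suc D * ?L"] exI[of _ p]) (auto intro: Suc_leD)
qed

definition Sw :: "nat \<Rightarrow> 'a list \<Rightarrow> 'a list \<Rightarrow> nat set" where
  "Sw c z w = {i. i < length z \<and> (\<exists>j<c. z ! ((i + j) mod length z) \<noteq> w ! ((i + j) mod length z))}"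

lemma dsym_Sw: "dsym c z w = card (Sw c z w)"
  by (simp add: dsym_def Sw_def Let_def)

lemma Sw_sub: "Sw c z w \<subseteq> {..<length z}" by (auto simp: Sw_def)

lemma dsym_le: "dsym c z w \<le> length z"
  unfolding dsym_Sw using card_mono[OF _ Sw_sub] by fastforce

lemma Sw_mono: "Sw c z w \<subseteq> Sw (Suc c) z w" by (auto simp: Sw_def) (meson less_SucI)

lemma dsym_Suc_strict:
  assumes "length w = length z" "z \<noteq> w" "0 < c" "dsym c z w < length z"
  shows "dsym c z w < dsym (Suc c) z w"
proof -
  let ?n = "length z"
  let ?S = "Sw c z w"
  obtain k where k: "k < ?n" "z ! k \<noteq> w ! k" using assms(1,2) nth_equalityI by metis
  have kS: "k \<in> ?S" using k assms(3) by (auto simp: Sw_def intro!: exI[of _ 0])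
  have n0: "0 < ?n" using k(1) by linarith
  have cS: "card ?S < ?n" using assms(4) by (simp only: dsym_Sw)
  have "?S \<noteq> {..<?n}"
  proof
    assume "?S = {..<?n}"
    then have "card ?S = ?n" by simp
    then show False using cS by linarith
  qed
  then obtain i0 where i0: "i0 < ?n" "i0 \<notin> ?S" using Sw_sub by blast
  have "\<exists>i<?n. i \<notin> ?S \<and> (i + 1) mod ?n \<in> ?S"
  proof (rule ccontr)
    assume H: "\<not> ?thesis"
    have "(i0 + m) mod ?n \<notin> ?S" for m
    proof (induction m)
      case 0 then show ?case using i0 by simp
    next
      case (Suc m)
      have "(i0 + m) mod ?n < ?n" using n0 by (rule mod_less_divisor)
      with H Suc have "((i0 + m) mod ?n + 1) mod ?n \<notin> ?S" by blast
      moreover have "((i0 + m) mod ?n + 1) mod ?n = (i0 + Suc m) mod ?n"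
        by (simp add: mod_Suc_eq)
      ultimately show ?case by simp
    qed
    moreover have "(i0 + (k + ?n - i0)) mod ?n = k" using k i0 by simp
    ultimately show False using kS by metis
  qed
  then obtain i where i: "i < ?n" "i \<notin> ?S" "(i + 1) mod ?n \<in> ?S" by blast
  have "i \<in> Sw (Suc c) z w"
  proof -
    from i(3) obtain j where j: "j < c"
      "z ! (((i + 1) mod ?n + j) mod ?n) \<noteq> w ! (((i + 1) mod ?n + j) mod ?n)"
      by (auto simp: Sw_def)
    have "((i + 1) mod ?n + j) mod ?n = (i + Suc j) mod ?n" by (simp add: mod_add_left_eq)
    with j i(1) show ?thesis unfolding Sw_def by (auto intro!: exI[of _ "Suc j"])
  qed
  then have "?S \<subset> Sw (Suc c) z w" using Sw_mono i(2) by blast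
  then show ?thesis unfolding dsym_Sw
    by (intro psubset_card_mono) (auto intro: finite_subset[OF Sw_sub])
qed


theorem mainTheorem9:
  fixes b M D :: nat
  assumes "0 < b" and "0 < M" and "0 < D"
    and "card (UNIV :: 'a set) ^ b < M"
    and "b - 1 \<le> D"
  shows "Nsym TYPE('a::{field,finite}) (b + 1) M D \<le> Nsym TYPE('a) b M (D - 1)"
proof -
  define P where "P c D' r \<longleftrightarrow> (\<exists>p :: nat \<Rightarrow> 'a list.
      (\<forall>i<M. length (p i) = r) \<and> inj_on p {..<M} \<and>
      (\<forall>i<M. \<forall>j<M. i \<noteq> j \<longrightarrow> D' \<le> dsym c (p i) (p j)))" for c D' r
  have N: "Nsym TYPE('a) c M D' = (LEAST r. P c D' r)" for c D'
    unfolding Nsym_def P_def by (rule refl)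
  define r where "r = (LEAST r. P b (D - 1) r)"
  have "\<exists>r. P b (D - 1) r" unfolding P_def by (rule exists_code[OF assms(1)])
  then have "P b (D - 1) r" unfolding r_def by (rule LeastI_ex)
  then obtain p :: "nat \<Rightarrow> 'a list" where
    len: "\<forall>i<M. length (p i) = r" and inj: "inj_on p {..<M}" and
    dist: "\<forall>i<M. \<forall>j<M. i \<noteq> j \<longrightarrow> D - 1 \<le> dsym b (p i) (p j)"
    unfolding P_def by blast
  let ?t = "\<lambda>i. take b (p i)"
  have "\<not> inj_on ?t {..<M}"
  proof
    assume a: "inj_on ?t {..<M}"
    have "?t ` {..<M} \<subseteq> {xs::'a list. length xs = min r b}" using len by auto
    with a have "card {..<M} \<le> card {xs::'a list. length xs = min r b}"
      by (intro card_inj_on_le[OF a _ finite_lists_univ])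
    also have "\<dots> = card (UNIV :: 'a set) ^ min r b" by (rule card_lists_univ)
    also have "\<dots> \<le> card (UNIV :: 'a set) ^ b"
      using card_field_ge2[where 'a='a] by (intro power_increasing) auto
    finally show False using assms(4) by simp
  qed
  then obtain i j where ij: "i < M" "j < M" "i \<noteq> j" "?t i = ?t j"
    unfolding inj_on_def by blast
  have li: "length (p i) = r" and lj: "length (p j) = r" using len ij by auto
  have "b < r"
  proof (rule ccontr)
    assume "\<not> b < r"
    then have "b \<ge> r" by simp
    have t1: "?t i = p i" using li \<open>b \<ge> r\<close> by (simp only: take_all)
    have t2: "?t j = p j" using lj \<open>b \<ge> r\<close> by (simp only: take_all)
    have e: "p i = p j" using t1 t2 ij(4) by metis
    have "i = j" using inj_onD[OF inj e] ij(1,2) by blast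
    then show False using ij(3) by simp
  qed
  have "0 \<notin> Sw b (p i) (p j)"
  proof
    assume "0 \<in> Sw b (p i) (p j)"
    then obtain l where l: "l < b"
      "p i ! ((0 + l) mod length (p i)) \<noteq> p j ! ((0 + l) mod length (p i))"
      unfolding Sw_def by blast
    have "(0 + l) mod length (p i) = l" using l(1) \<open>b < r\<close> li by simp
    with l have "p i ! l \<noteq> p j ! l" by simp
    moreover have "p i ! l = ?t i ! l" "p j ! l = ?t j ! l" using l(1) by simp_all
    ultimately show False using ij(4) by simp
  qed
  then have "Sw b (p i) (p j) \<subseteq> {..<r} - {0}" using Sw_sub[of b "p i" "p j"] li by blast
  then have "card (Sw b (p i) (p j)) \<le> card ({..<r} - {0::nat})"
    by (intro card_mono) auto
  also have "\<dots> = r - 1" using \<open>b < r\<close> by (simp add: card_Diff_singleton)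
  finally have "dsym b (p i) (p j) \<le> r - 1" unfolding dsym_Sw .
  moreover have "D - 1 \<le> dsym b (p i) (p j)" using dist ij by blast
  ultimately have Dr: "D \<le> r" using \<open>b < r\<close> assms(3) by linarith
  have dd: "D \<le> dsym (b + 1) (p i') (p j')" if h: "i' < M" "j' < M" "i' \<noteq> j'" for i' j'
  proof -
    have pne: "p i' \<noteq> p j'"
    proof
      assume e: "p i' = p j'"
      have "i' = j'" using inj_onD[OF inj e] h(1,2) by blast
      then show False using h(3) by simp
    qed
    have li': "length (p i') = r" "length (p j') = r" using len h by auto
    have d1: "D - 1 \<le> dsym b (p i') (p j')" using dist h by blast
    show ?thesis
    proof (cases "dsym b (p i') (p j') < r")
      case True
      then have "dsym b (p i') (p j') < dsym (Suc b) (p i') (p j')"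
        using dsym_Suc_strict[OF _ pne assms(1)] li' by simp
      then show ?thesis using d1 by simp
    next
      case False
      then have "dsym b (p i') (p j') = r" using dsym_le[of b "p i'" "p j'"] li' by simp
      moreover have "dsym b (p i') (p j') \<le> dsym (Suc b) (p i') (p j')"
        unfolding dsym_Sw by (rule card_mono[OF finite_subset[OF Sw_sub] Sw_mono]) simp
      ultimately show ?thesis using Dr by simp
    qed
  qed
  have "P (b + 1) D r" unfolding P_def
    using len inj dd by blast
  then show ?thesis unfolding N r_def[symmetric] by (rule Least_le)
qed
end
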